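(* Fix an integer $\Delta\ge3$ and $\kappa\in(1,\Delta/2]$. Let $$\beta=\tfrac12\,e^{-\left(1+\frac{2}{\kappa-1}\right)}\left(\frac{\Delta}{2\kappa}\right)^{-\left(1+\frac{1}{\kappa-1}\right)},$$ and for each integer $n\ge\beta^{-1}$ set $r=r(n)=\lfloor\beta n\rfloor$. Let $G$ be uniformly random in $\mathcal{G}_{n,\Delta}$. Then asymptotically almost surely $\alpha_r(G)\le\kappa$.
   Context: $\mathcal{G}_{n,\Delta}$ is the uniform probability space of all $\Delta$-regular simple graphs on vertex set $\{1,\dots,n\}$ (with $n$ even if $\Delta$ is odd); asymptotically almost surely means with probability tending to $1$ as $n\to\infty$. For an $n$-vertex graph $G$ and positive integer $r$, $\alpha_r(G)=\frac1r\max_{S\subseteq V,|S|=r}e_G(S)$, where $e_G(S)$ is the number of edges with both endpoints in $S$. *)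

theory Defs
  imports "HOL-Analysis.Analysis"
begin

definition simple_graphs :: "nat \<Rightarrow> nat set set set" where
  "simple_graphs n = {E. E \<subseteq> {e. e \<subseteq> {1..n} \<and> card e = 2}}"

definition degree :: "nat set set \<Rightarrow> nat \<Rightarrow> nat" where
  "degree E v = card {e \<in> E. v \<in> e}"

text \<open>The (finite) set of all Delta-regular simple graphs on {1..n};
  G(n,Delta) is the uniform distribution on this set.\<close>
definition regular_graphs :: "nat \<Rightarrow> nat \<Rightarrow> nat set set set" where
  "regular_graphs n \<Delta> = {E \<in> simple_graphs n. \<forall>v \<in> {1..n}. degree E v = \<Delta>}"

definition prob_reg :: "nat \<Rightarrow> nat \<Rightarrow> (nat set set \<Rightarrow> bool) \<Rightarrow> real" where
  "prob_reg n \<Delta> P = real (card {E \<in> regular_graphs n \<Delta>. P E}) / real (card (regular_graphs n \<Delta>))"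

text \<open>Asymptotically almost surely in G(n,Delta): the probability of P n tends to 1
  as n \<rightarrow> \<infinity> over the admissible n (n even if Delta odd).\<close>
definition aas_reg :: "nat \<Rightarrow> (nat \<Rightarrow> nat set set \<Rightarrow> bool) \<Rightarrow> bool" where
  "aas_reg \<Delta> P \<longleftrightarrow>
     (\<forall>\<epsilon>>0. \<exists>N. \<forall>n\<ge>N. (even n \<or> even \<Delta>) \<longrightarrow> prob_reg n \<Delta> (P n) \<ge> 1 - \<epsilon>)"

definition edges_in :: "nat set set \<Rightarrow> nat set \<Rightarrow> nat" where
  "edges_in E S = card {e \<in> E. e \<subseteq> S}"

definition alpha_r :: "nat \<Rightarrow> nat set set \<Rightarrow> nat \<Rightarrow> real" where
  "alpha_r n E r = real (Max {edges_in E S | S. S \<subseteq> {1..n} \<and> card S = r}) / real r"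

end

theory Submission
  imports Defs
begin

definition P2 :: "nat set \<Rightarrow> nat set set" where "P2 V = {e. e \<subseteq> V \<and> card e = 2}"
definition nb :: "nat set set \<Rightarrow> nat \<Rightarrow> nat set" where "nb E x = {y. {x,y} \<in> E}"

lemma P2_D: "e \<in> P2 V \<Longrightarrow> \<exists>a b. e = {a,b} \<and> a \<noteq> b \<and> a \<in> V \<and> b \<in> V"
  unfolding P2_def by (auto simp: card_2_iff)

lemma P2_I: "a \<noteq> b \<Longrightarrow> a \<in> V \<Longrightarrow> b \<in> V \<Longrightarrow> {a,b} \<in> P2 V"
  unfolding P2_def by auto

lemma finite_P2: "finite V \<Longrightarrow> finite (P2 V)"
  unfolding P2_def by (rule finite_subset[of _ "Pow V"]) auto

lemma nb_sub: "E \<subseteq> P2 V \<Longrightarrow> nb E x \<subseteq> V"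
  unfolding nb_def P2_def by auto

lemma nb_not_self: "E \<subseteq> P2 V \<Longrightarrow> x \<notin> nb E x"
  unfolding nb_def P2_def by auto

lemma nb_card:
  assumes "E \<subseteq> P2 V"
  shows "card (nb E x) = degree E x"
proof -
  have "bij_betw (\<lambda>y. {x,y}) (nb E x) {e\<in>E. x\<in>e}"
  proof (rule bij_betwI')
    show "\<And>y z. y \<in> nb E x \<Longrightarrow> z \<in> nb E x \<Longrightarrow> ({x, y} = {x, z}) = (y = z)"
      by (auto simp: doubleton_eq_iff)
    show "\<And>y. y \<in> nb E x \<Longrightarrow> {x, y} \<in> {e \<in> E. x \<in> e}" by (auto simp: nb_def)
    show "\<exists>y\<in>nb E x. e = {x, y}" if "e \<in> {e \<in> E. x \<in> e}" for e
    proof -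
      from that assms obtain a b where "e = {a,b}" "e \<in> E" "x \<in> e" by (auto dest!: P2_D)
      then show ?thesis by (auto simp: nb_def insert_commute)
    qed
  qed
  then show ?thesis unfolding degree_def by (rule bij_betw_same_card)
qed

lemma reg_D:
  assumes "E \<in> regular_graphs n \<Delta>"
  shows "E \<subseteq> P2 {1..n}" "\<And>v. v \<in> {1..n} \<Longrightarrow> card (nb E v) = \<Delta>" "finite E"
proof -
  show 1: "E \<subseteq> P2 {1..n}" using assms unfolding regular_graphs_def simple_graphs_def P2_def by auto
  show "\<And>v. v \<in> {1..n} \<Longrightarrow> card (nb E v) = \<Delta>"
    using assms nb_card[OF 1] unfolding regular_graphs_def by auto
  show "finite E" using 1 finite_P2 finite_subset by blast
qed

lemma finite_reg: "finite (regular_graphs n \<Delta>)"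
proof -
  have "regular_graphs n \<Delta> \<subseteq> Pow (P2 {1..n})" using reg_D(1) by blast
  then show ?thesis using finite_P2[of "{1..n}"] finite_subset by blast
qed

lemma OP_card:
  assumes "E \<in> regular_graphs n \<Delta>"
  shows "card {(x,y). {x,y} \<in> E} = n * \<Delta>"
proof -
  have "{(x,y). {x,y} \<in> E} = Sigma {1..n} (nb E)"
    using reg_D(1)[OF assms] by (auto simp: nb_def P2_def)
  moreover have "card (Sigma {1..n} (nb E)) = n * \<Delta>"
  proof -
    have "\<forall>a. finite (nb E a)" using nb_sub[OF reg_D(1)[OF assms]]
      by (meson finite_atLeastAtMost finite_subset)
    then show ?thesis using reg_D[OF assms] by (subst card_SigmaI) auto
  qed
  ultimately show ?thesis by simp
qed

lemma card_filter2:
  assumes "a \<noteq> b"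
  shows "card {f\<in>{a,b}. w \<in> f} = (if w \<in> a then 1 else 0) + (if w \<in> b then (1::nat) else 0)"
proof -
  have "{f\<in>{a,b}. w \<in> f} = (if w\<in>a then {a} else {}) \<union> (if w\<in>b then {b} else {})" by auto
  then show ?thesis using assms by (cases "w \<in> a"; cases "w \<in> b") auto
qed

lemma deg_swap:
  assumes "finite E" "D \<subseteq> E" "A \<inter> E = {}" "finite A"
    "card {f\<in>D. w\<in>f} = card {f\<in>A. w\<in>f}"
  shows "card {f \<in> (E - D) \<union> A. w\<in>f} = card {f\<in>E. w\<in>f}"
proof -
  have eq: "{f \<in> (E - D) \<union> A. w\<in>f} = ({f\<in>E. w\<in>f} - {f\<in>D. w\<in>f}) \<union> {f\<in>A. w\<in>f}" by auto
  have "card {f \<in> (E - D) \<union> A. w\<in>f} = card ({f\<in>E. w\<in>f} - {f\<in>D. w\<in>f}) + card {f\<in>A. w\<in>f}"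
    unfolding eq using assms by (intro card_Un_disjoint) auto
  also have "card ({f\<in>E. w\<in>f} - {f\<in>D. w\<in>f}) = card {f\<in>E. w\<in>f} - card {f\<in>D. w\<in>f}"
    using assms by (intro card_Diff_subset) (auto intro: finite_subset[of _ E])
  also have "card {f\<in>D. w\<in>f} \<le> card {f\<in>E. w\<in>f}"
    using assms by (intro card_mono) auto
  ultimately show ?thesis using assms(5) by simp
qed

lemma switch_regular:
  assumes E: "E \<in> regular_graphs n \<Delta>"
    and "{u,v} \<in> E" "{x,y} \<in> E" "u \<noteq> v" "x \<noteq> y" "x \<notin> {u,v}" "y \<notin> {u,v}"
    "{u,x} \<notin> E" "{v,y} \<notin> E"
  shows "(E - {{u,v},{x,y}}) \<union> {{u,x},{v,y}} \<in> regular_graphs n \<Delta>"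
proof -
  have sub: "E \<subseteq> P2 {1..n}" and fin: "finite E" using reg_D[OF E] by auto
  have inV: "u \<in> {1..n}" "v \<in> {1..n}" "x \<in> {1..n}" "y \<in> {1..n}"
    using assms(2,3) sub by (auto simp: P2_def)
  have ne: "{u,v} \<noteq> {x,y}" "{u,x} \<noteq> {v,y}" using assms by (auto simp: doubleton_eq_iff)
  have S: "(E - {{u,v},{x,y}}) \<union> {{u,x},{v,y}} \<in> simple_graphs n"
    using sub inV assms unfolding simple_graphs_def P2_def by auto
  have "degree ((E - {{u,v},{x,y}}) \<union> {{u,x},{v,y}}) w = \<Delta>" if w: "w \<in> {1..n}" for w
  proof -
    have "degree ((E - {{u,v},{x,y}}) \<union> {{u,x},{v,y}}) w = degree E w"
      unfolding degree_def
    proof (rule deg_swap)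
      show "finite E" by fact
      show "{{u, v}, {x, y}} \<subseteq> E" using assms by auto
      show "{{u, x}, {v, y}} \<inter> E = {}" using assms by auto
      show "finite {{u, x}, {v, y}}" by simp
      show "card {f \<in> {{u, v}, {x, y}}. w \<in> f} = card {f \<in> {{u, x}, {v, y}}. w \<in> f}"
        unfolding card_filter2[OF ne(1)] card_filter2[OF ne(2)] using assms by auto
    qed
    also have "\<dots> = \<Delta>" using E w unfolding regular_graphs_def by auto
    finally show ?thesis .
  qed
  then show ?thesis using S unfolding regular_graphs_def by auto
qed

lemma card_pairs_of:
  assumes "finite G" "G \<subseteq> P2 V"
  shows "card {(x,y). {x,y} \<in> G} \<le> 2 * card G"
proof -
  have eq: "{(x,y). {x,y} \<in> G} = (\<Union>g\<in>G. {(x,y). {x,y} = g})" by auto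
  have "card (\<Union>g\<in>G. {(x,y). {x,y} = g}) \<le> (\<Sum>g\<in>G. card {(x,y). {x,y} = g})"
    using assms by (intro card_UN_le) auto
  also have "\<dots> \<le> (\<Sum>g\<in>G. 2)"
  proof (rule sum_mono)
    fix g assume "g \<in> G"
    then obtain a b where g: "g = {a,b}" "a \<noteq> b" using assms P2_D by blast
    have "{(x,y). {x,y} = g} = {(a,b),(b,a)}" unfolding g by (auto simp: doubleton_eq_iff)
    then show "card {(x,y). {x,y} = g} \<le> 2" by (simp add: card_insert_le_m1)
  qed
  finally show ?thesis using eq by simp
qed

lemma switch_lower:
  assumes E: "E \<in> regular_graphs n \<Delta>" and F: "F \<subseteq> P2 {1..n}" "finite F"
    and uv: "u \<noteq> v" "u \<in> {1..n}" "v \<in> {1..n}"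
  shows "n * \<Delta> \<le> card {(x,y). {x,y} \<in> E \<and> {x,y} \<notin> insert {u,v} F \<and> x \<notin> {u,v} \<and> y \<notin> {u,v}
            \<and> {u,x} \<notin> E \<and> {v,y} \<notin> E} + (2 * card F + 2 + 4 * \<Delta> + 2 * \<Delta>^2)"
proof -
  define V where "V = {1..n::nat}"
  have sub: "E \<subseteq> P2 V" and deg: "\<And>w. w \<in> V \<Longrightarrow> card (nb E w) = \<Delta>"
    using reg_D[OF E] unfolding V_def by auto
  have nbV: "\<And>w. nb E w \<subseteq> V" using nb_sub[OF sub] .
  have finV: "finite V" unfolding V_def by simp
  have finnb: "\<And>w. finite (nb E w)" using nbV finV finite_subset by blast
  have degle: "\<And>w. card (nb E w) \<le> \<Delta>"
  proof -
    fix w show "card (nb E w) \<le> \<Delta>"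
    proof (cases "w \<in> V")
      case True then show ?thesis using deg by simp
    next
      case False
      then have "nb E w = {}" using sub unfolding nb_def P2_def by auto
      then show ?thesis by simp
    qed
  qed
  define Vd where "Vd = {(x,y). {x,y} \<in> E \<and> {x,y} \<notin> insert {u,v} F \<and> x \<notin> {u,v} \<and> y \<notin> {u,v}
            \<and> {u,x} \<notin> E \<and> {v,y} \<notin> E}"
  define X1 where "X1 = {(x,y). {x,y} \<in> insert {u,v} F}"
  define X2 where "X2 = {u} \<times> nb E u \<union> {v} \<times> nb E v"
  define X3 where "X3 = nb E u \<times> {u} \<union> nb E v \<times> {v}"
  define X4 where "X4 = Sigma (nb E u) (nb E)"
  define X5 where "X5 = (\<lambda>(a,b). (b,a)) ` Sigma (nb E v) (nb E)"
  have OP: "{(x,y). {x,y} \<in> E} \<subseteq> Vd \<union> X1 \<union> X2 \<union> X3 \<union> X4 \<union> X5"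
  proof
    fix p assume p: "p \<in> {(x,y). {x,y} \<in> E}"
    obtain x y where pxy: "p = (x,y)" by fastforce
    show "p \<in> Vd \<union> X1 \<union> X2 \<union> X3 \<union> X4 \<union> X5"
    proof (cases "p \<in> Vd")
      case False
      have xy: "{x,y} \<in> E" using p pxy by simp
      then have "y \<in> nb E x" "x \<in> nb E y" by (auto simp: nb_def insert_commute)
      moreover have "x \<in> nb E u" if "{u,x} \<in> E" using that by (simp add: nb_def)
      moreover have "y \<in> nb E v" if "{v,y} \<in> E" using that by (simp add: nb_def)
      ultimately show ?thesis using False xy unfolding pxy Vd_def X1_def X2_def X3_def X4_def X5_def
        by (auto simp: image_iff)
    qed simp
  qed
  have fin1: "finite X1" "finite X2" "finite X3" "finite X4" "finite X5"
  proof -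
    have "insert {u,v} F \<subseteq> P2 V" using F uv unfolding V_def by (auto intro: P2_I)
    then have "X1 \<subseteq> V \<times> V" unfolding X1_def P2_def by auto
    then show "finite X1" using finV finite_subset by blast
    show "finite X2" "finite X3" "finite X4" "finite X5" unfolding X2_def X3_def X4_def X5_def
      using finnb by auto
  qed
  have finVd: "finite Vd"
  proof -
    have "Vd \<subseteq> V \<times> V" unfolding Vd_def using sub unfolding P2_def by auto
    then show ?thesis using finV finite_subset by blast
  qed
  have c1: "card X1 \<le> 2 * card F + 2"
  proof -
    have "insert {u,v} F \<subseteq> P2 V" using F uv unfolding V_def by (auto intro: P2_I)
    then have "card X1 \<le> 2 * card (insert {u,v} F)" unfolding X1_def
      using F by (intro card_pairs_of) auto
    also have "\<dots> \<le> 2 * card F + 2" using F card_insert_le_m1 by (simp add: card_insert_if)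
    finally show ?thesis .
  qed
  have c2: "card X2 \<le> 2 * \<Delta>"
  proof -
    have "card X2 \<le> card ({u} \<times> nb E u) + card ({v} \<times> nb E v)" unfolding X2_def by (rule card_Un_le)
    also have "\<dots> \<le> 2 * \<Delta>" using degle[of u] degle[of v] by (simp add: card_cartesian_product)
    finally show ?thesis .
  qed
  have c3: "card X3 \<le> 2 * \<Delta>"
  proof -
    have "card X3 \<le> card (nb E u \<times> {u}) + card (nb E v \<times> {v})" unfolding X3_def by (rule card_Un_le)
    also have "\<dots> \<le> 2 * \<Delta>" using degle[of u] degle[of v] by (simp add: card_cartesian_product)
    finally show ?thesis .
  qed
  have sig: "card (Sigma (nb E w) (nb E)) \<le> \<Delta>^2" for w
  proof -
    have "card (Sigma (nb E w) (nb E)) = (\<Sum>a\<in>nb E w. card (nb E a))"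
      using finnb by (subst card_SigmaI) auto
    also have "\<dots> \<le> (\<Sum>a\<in>nb E w. \<Delta>)" by (rule sum_mono) (rule degle)
    also have "\<dots> \<le> \<Delta> * \<Delta>" using degle[of w] by simp
    finally show ?thesis by (simp add: power2_eq_square)
  qed
  have c4: "card X4 \<le> \<Delta>^2" unfolding X4_def by (rule sig)
  have c5: "card X5 \<le> \<Delta>^2" unfolding X5_def by (rule le_trans[OF card_image_le sig]) (use finnb in auto)
  have "n * \<Delta> = card {(x,y). {x,y} \<in> E}" using OP_card[OF E] by simp
  also have "\<dots> \<le> card (Vd \<union> X1 \<union> X2 \<union> X3 \<union> X4 \<union> X5)"
    using OP fin1 finVd by (intro card_mono) auto
  also have "\<dots> \<le> card Vd + card X1 + card X2 + card X3 + card X4 + card X5"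
    by (meson add_mono card_Un_le le_refl order_trans)
  also have "\<dots> \<le> card Vd + (2 * card F + 2 + 4 * \<Delta> + 2 * \<Delta>^2)"
    using c1 c2 c3 c4 c5 by simp
  finally show ?thesis unfolding Vd_def .
qed

lemma switch_recover:
  assumes "{u,v} \<in> E" "{x,y} \<in> E" "u \<noteq> v" "x \<noteq> y" "x \<notin> {u,v}" "y \<notin> {u,v}"
    "{u,x} \<notin> E" "{v,y} \<notin> E"
  shows "E = (((E - {{u,v},{x,y}}) \<union> {{u,x},{v,y}}) - {{u,x},{v,y}}) \<union> {{u,v},{x,y}}"
proof -
  have D: "{{u,v},{x,y}} \<subseteq> E" and N: "{{u,x},{v,y}} \<inter> E = {}" using assms by auto
  have "\<And>D N. D \<subseteq> E \<Longrightarrow> N \<inter> E = {} \<Longrightarrow> E = ((E - D) \<union> N - N) \<union> D" by blast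
  from this[OF D N] show ?thesis .
qed

lemma switch_count:
  assumes F: "F \<subseteq> P2 {1..n}" "finite F" and uv: "u \<noteq> v" "u \<in> {1..n}" "v \<in> {1..n}" "{u,v} \<notin> F"
  shows "card {E\<in>regular_graphs n \<Delta>. insert {u,v} F \<subseteq> E} * (n*\<Delta>) \<le>
     card {E\<in>regular_graphs n \<Delta>. insert {u,v} F \<subseteq> E} * (2 * card F + 2 + 4 * \<Delta> + 2 * \<Delta>^2)
     + \<Delta>^2 * card {E\<in>regular_graphs n \<Delta>. F \<subseteq> E}"
proof -
  define R where "R = regular_graphs n \<Delta>"
  define c where "c = 2 * card F + 2 + 4 * \<Delta> + 2 * \<Delta>^2"
  define A where "A = {E\<in>R. insert {u,v} F \<subseteq> E}"
  define B where "B = {E\<in>R. F \<subseteq> E}"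
  define Vd where "Vd E = {(x,y). {x,y} \<in> E \<and> {x,y} \<notin> insert {u,v} F \<and> x \<notin> {u,v} \<and> y \<notin> {u,v}
            \<and> {u,x} \<notin> E \<and> {v,y} \<notin> E}" for E
  define T where "T = Sigma A Vd"
  define U where "U = Sigma B (\<lambda>E. nb E u \<times> nb E v)"
  define sw where "sw p = (case p of (E,(x,y)) \<Rightarrow> ((E - {{u,v},{x,y}}) \<union> {{u,x},{v,y}}, (x::nat,y::nat)))"
    for p :: "nat set set \<times> nat \<times> nat"
  have finR: "finite R" unfolding R_def by (rule finite_reg)
  have finA: "finite A" "finite B" using finR unfolding A_def B_def by auto
  have finVd: "finite (Vd E)" if "E \<in> R" for E
  proof -
    have "Vd E \<subseteq> {1..n} \<times> {1..n}" using reg_D(1)[of E n \<Delta>] that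
      unfolding Vd_def R_def P2_def by auto
    then show ?thesis using finite_subset by blast
  qed
  have finnb: "finite (nb E w)" if "E \<in> R" for E w
    using nb_sub[OF reg_D(1)[of E n \<Delta>]] that unfolding R_def by (meson finite_atLeastAtMost finite_subset)
  have cT: "card T = (\<Sum>E\<in>A. card (Vd E))"
    unfolding T_def using finA finVd by (subst card_SigmaI) (auto simp: A_def)
  have cU: "card U = card B * \<Delta>^2"
  proof -
    have "card U = (\<Sum>E\<in>B. card (nb E u \<times> nb E v))"
      unfolding U_def using finA finnb by (subst card_SigmaI) (auto simp: B_def)
    also have "\<dots> = (\<Sum>E\<in>B. \<Delta> * \<Delta>)"
      by (rule sum.cong) (use uv reg_D(2) in \<open>auto simp: card_cartesian_product B_def R_def\<close>)
    finally show ?thesis by (simp add: power2_eq_square)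
  qed
  have finU: "finite U" unfolding U_def using finA finnb by (auto simp: B_def)
  have img: "sw ` T \<subseteq> U"
  proof
    fix q assume "q \<in> sw ` T"
    then obtain E x y where q: "q = sw (E,(x,y))" and ET: "E \<in> A" "(x,y) \<in> Vd E"
      unfolding T_def by auto
    have ER: "E \<in> R" and FE: "insert {u,v} F \<subseteq> E" using ET unfolding A_def by auto
    have V: "{x,y} \<in> E" "{x,y} \<notin> insert {u,v} F" "x \<notin> {u,v}" "y \<notin> {u,v}" "{u,x} \<notin> E" "{v,y} \<notin> E"
      using ET unfolding Vd_def by auto
    have "x \<noteq> y" using V(1) reg_D(1)[of E n \<Delta>] ER unfolding R_def P2_def by auto
    then have "(E - {{u,v},{x,y}}) \<union> {{u,x},{v,y}} \<in> R"
      unfolding R_def using switch_regular[of E n \<Delta> u v x y] ER FE V uv unfolding R_def by auto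
    moreover have "F \<subseteq> (E - {{u,v},{x,y}}) \<union> {{u,x},{v,y}}" using FE V uv by auto
    ultimately show "q \<in> U" unfolding q sw_def U_def B_def by (auto simp: nb_def)
  qed
  have inj: "inj_on sw T"
  proof (rule inj_onI)
    fix p q assume p: "p \<in> T" and q: "q \<in> T" and eq: "sw p = sw q"
    obtain E x y where p': "p = (E,(x,y))" by (metis prod.exhaust)
    obtain E2 x2 y2 where q': "q = (E2,(x2,y2))" by (metis prod.exhaust)
    have xy: "x2 = x" "y2 = y" using eq unfolding p' q' sw_def by auto
    have E': "(E - {{u,v},{x,y}}) \<union> {{u,x},{v,y}} = (E2 - {{u,v},{x,y}}) \<union> {{u,x},{v,y}}"
      using eq unfolding p' q' sw_def xy by auto
    have goodE: "E = (((E - {{u,v},{x,y}}) \<union> {{u,x},{v,y}}) - {{u,x},{v,y}}) \<union> {{u,v},{x,y}}"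
      if "E \<in> A" "(x,y) \<in> Vd E" for E
    proof (rule switch_recover)
      have ER: "E \<in> R" and FE: "insert {u,v} F \<subseteq> E" using that unfolding A_def by auto
      show "{u,v} \<in> E" using FE by auto
      show "{x,y} \<in> E" "x \<notin> {u,v}" "y \<notin> {u,v}" "{u,x} \<notin> E" "{v,y} \<notin> E"
        using that unfolding Vd_def by auto
      then show "x \<noteq> y" using reg_D(1)[of E n \<Delta>] ER unfolding R_def P2_def by auto
      show "u \<noteq> v" by fact
    qed
    have g1: "E = (((E - {{u,v},{x,y}}) \<union> {{u,x},{v,y}}) - {{u,x},{v,y}}) \<union> {{u,v},{x,y}}"
      by (rule goodE) (use p in \<open>auto simp: p' T_def\<close>)
    have g2: "E2 = (((E2 - {{u,v},{x,y}}) \<union> {{u,x},{v,y}}) - {{u,x},{v,y}}) \<union> {{u,v},{x,y}}"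
      by (rule goodE) (use q in \<open>auto simp: q' xy T_def\<close>)
    have "E = E2" using g1 g2 unfolding E' by (metis (no_types))
    then show "p = q" unfolding p' q' xy by simp
  qed
  have "card T \<le> card U" using card_inj_on_le[OF inj img finU] .
  have low: "n * \<Delta> \<le> card (Vd E) + c" if "E \<in> A" for E
  proof -
    have "E \<in> regular_graphs n \<Delta>" using that unfolding A_def R_def by simp
    from switch_lower[OF this F uv(1-3)] show ?thesis unfolding Vd_def c_def .
  qed
  have "card A * (n * \<Delta>) = (\<Sum>E\<in>A. n * \<Delta>)" by simp
  also have "\<dots> \<le> (\<Sum>E\<in>A. card (Vd E) + c)" by (rule sum_mono) (rule low)
  also have "\<dots> = card T + card A * c" by (simp add: cT sum.distrib)
  also have "\<dots> \<le> card A * c + \<Delta>^2 * card B" using \<open>card T \<le> card U\<close> cU by (simp add: mult.commute)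
  finally show ?thesis unfolding A_def B_def R_def c_def .
qed

lemma N_bound:
  fixes n \<Delta> K :: nat and L :: real
  assumes L: "L = real (n*\<Delta>) - real (2*K + 4*\<Delta> + 2*\<Delta>^2)" "L > 0"
  shows "finite F \<Longrightarrow> F \<subseteq> P2 {1..n} \<Longrightarrow> card F \<le> K \<Longrightarrow>
    real (card {E\<in>regular_graphs n \<Delta>. F \<subseteq> E}) \<le> (\<Delta>^2/L)^(card F) * card (regular_graphs n \<Delta>)"
proof (induction F rule: finite_induct)
  case empty
  then show ?case by simp
next
  case (insert e F)
  obtain u v where e: "e = {u,v}" "u \<noteq> v" "u \<in> {1..n}" "v \<in> {1..n}"
    using insert.prems P2_D by blast
  define a where "a = card {E\<in>regular_graphs n \<Delta>. insert e F \<subseteq> E}"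
  define b where "b = card {E\<in>regular_graphs n \<Delta>. F \<subseteq> E}"
  have cF: "card (insert e F) = card F + 1" using insert by simp
  have IH: "real b \<le> (\<Delta>^2/L)^(card F) * card (regular_graphs n \<Delta>)"
    using insert cF unfolding b_def by auto
  have sc: "a * (n*\<Delta>) \<le> a * (2 * card F + 2 + 4 * \<Delta> + 2 * \<Delta>^2) + \<Delta>^2 * b"
    using switch_count[of F n u v \<Delta>] insert e unfolding a_def b_def by auto
  have "a * (2 * card F + 2 + 4 * \<Delta> + 2 * \<Delta>^2) \<le> a * (2*K + 4*\<Delta> + 2*\<Delta>^2)"
    using insert.prems cF by (intro mult_le_mono2) auto
  with sc have "a * (n*\<Delta>) \<le> a * (2*K + 4*\<Delta> + 2*\<Delta>^2) + \<Delta>^2 * b" by linarith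
  then have "real a * real (n*\<Delta>) \<le> real a * real (2*K + 4*\<Delta> + 2*\<Delta>^2) + real (\<Delta>^2) * real b"
    by (metis of_nat_add of_nat_le_iff of_nat_mult)
  then have "real a * L \<le> real (\<Delta>^2) * real b" unfolding L(1) by (simp add: algebra_simps)
  then have "real a \<le> (\<Delta>^2 / L) * real b" using L(2) by (simp add: field_simps)
  also have "\<dots> \<le> (\<Delta>^2 / L) * ((\<Delta>^2/L)^(card F) * card (regular_graphs n \<Delta>))"
    using IH L(2) by (intro mult_left_mono) auto
  also have "\<dots> = (\<Delta>^2/L)^(card (insert e F)) * card (regular_graphs n \<Delta>)"
    using cF by simp
  finally show ?case unfolding a_def .
qed

lemma card_P2: assumes "finite S" shows "card (P2 S) = card S choose 2"
  unfolding P2_def using n_subsets[OF assms, of 2] by simp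

lemma S_bound:
  fixes n \<Delta> K k :: nat and L :: real
  assumes L: "L = real (n*\<Delta>) - real (2*K + 4*\<Delta> + 2*\<Delta>^2)" "L > 0"
    and S: "S \<subseteq> {1..n}" and k: "k \<le> K"
  shows "real (card {E\<in>regular_graphs n \<Delta>. k \<le> edges_in E S})
     \<le> real ((card S choose 2) choose k) * (\<Delta>^2/L)^k * card (regular_graphs n \<Delta>)"
proof -
  define R where "R = regular_graphs n \<Delta>"
  define Fs where "Fs = {F. F \<subseteq> P2 S \<and> card F = k}"
  have finS: "finite S" using S finite_subset by blast
  have finP: "finite (P2 S)" using finite_P2[OF finS] .
  have finFs: "finite Fs" unfolding Fs_def using finP by auto
  have cFs: "card Fs = (card S choose 2) choose k"
    unfolding Fs_def using n_subsets[OF finP] card_P2[OF finS] by simp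
  have sub: "{E\<in>R. k \<le> edges_in E S} \<subseteq> (\<Union>F\<in>Fs. {E\<in>R. F \<subseteq> E})"
  proof
    fix E assume E: "E \<in> {E\<in>R. k \<le> edges_in E S}"
    then have ER: "E \<in> R" and ke: "k \<le> card {e\<in>E. e \<subseteq> S}" unfolding edges_in_def by auto
    obtain F where F: "F \<subseteq> {e\<in>E. e \<subseteq> S}" "card F = k" "finite F"
      using obtain_subset_with_card_n[OF ke] by metis
    have "F \<subseteq> P2 S" using F reg_D(1)[of E n \<Delta>] ER unfolding R_def P2_def by auto
    then show "E \<in> (\<Union>F\<in>Fs. {E\<in>R. F \<subseteq> E})" using F ER unfolding Fs_def by auto
  qed
  have finR: "finite R" unfolding R_def by (rule finite_reg)
  have "card {E\<in>R. k \<le> edges_in E S} \<le> card (\<Union>F\<in>Fs. {E\<in>R. F \<subseteq> E})"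
    using sub finR by (intro card_mono) (auto intro: finite_subset[of _ R])
  also have "\<dots> \<le> (\<Sum>F\<in>Fs. card {E\<in>R. F \<subseteq> E})" using finFs by (rule card_UN_le)
  finally have "real (card {E\<in>R. k \<le> edges_in E S}) \<le> (\<Sum>F\<in>Fs. real (card {E\<in>R. F \<subseteq> E}))"
    by (simp only: of_nat_sum[symmetric] of_nat_le_iff)
  also have "\<dots> \<le> (\<Sum>F\<in>Fs. (\<Delta>^2/L)^k * card R)"
  proof (rule sum_mono)
    fix F assume "F \<in> Fs"
    then have F: "F \<subseteq> P2 S" "card F = k" unfolding Fs_def by auto
    then have "finite F" using finP finite_subset by blast
    moreover have "F \<subseteq> P2 {1..n}" using F(1) S unfolding P2_def by auto
    ultimately show "real (card {E\<in>R. F \<subseteq> E}) \<le> (\<Delta>^2/L)^k * card R"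
      using N_bound[OF L, of F] F k unfolding R_def by auto
  qed
  also have "\<dots> = real (card Fs) * (\<Delta>^2/L)^k * card R" by simp
  finally show ?thesis unfolding cFs R_def .
qed

lemma circ_inj:
  fixes n a :: nat
  assumes "n > 0"
  shows "inj_on (\<lambda>b. nat ((int b - int a) mod int n)) {1..n}"
proof (rule inj_onI)
  fix b b' assume b: "b \<in> {1..n}" "b' \<in> {1..n}"
    and eq: "nat ((int b - int a) mod int n) = nat ((int b' - int a) mod int n)"
  have "(int b - int a) mod int n = (int b' - int a) mod int n"
    using eq assms by (simp add: nat_eq_iff2)
  then have "int n dvd (int b - int a) - (int b' - int a)" by (simp add: mod_eq_dvd_iff)
  then have d: "int n dvd int b - int b'" by simp
  have "\<bar>int b - int b'\<bar> < int n" using b by auto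
  have "int b - int b' = 0"
  proof (rule ccontr)
    assume nz: "int b - int b' \<noteq> 0"
    have "\<bar>int n\<bar> \<le> \<bar>int b - int b'\<bar>" by (rule dvd_imp_le_int[OF nz d])
    then show False using \<open>\<bar>int b - int b'\<bar> < int n\<close> by simp
  qed
  then show "b = b'" by simp
qed

lemma circ_image:
  fixes n a :: nat
  assumes "n > 0"
  shows "(\<lambda>b. nat ((int b - int a) mod int n)) ` {1..n} = {0..<n}"
proof -
  let ?f = "\<lambda>b. nat ((int b - int a) mod int n)"
  have sub: "?f ` {1..n} \<subseteq> {0..<n}" using assms by (auto simp: nat_less_iff)
  have "card (?f ` {1..n}) = n" using card_image[OF circ_inj[OF assms]] by simp
  then show ?thesis using card_subset_eq[OF _ sub] by simp
qed

lemma exists_regular: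
  fixes n \<Delta> :: nat
  assumes "\<Delta> \<ge> 2" "n \<ge> 2*\<Delta> + 2" "even n \<or> even \<Delta>"
  shows "regular_graphs n \<Delta> \<noteq> {}"
proof -
  define h where "h = \<Delta> div 2"
  define D where "D = {1..h} \<union> {n-h..n-1} \<union> (if odd \<Delta> then {n div 2} else {})"
  define f where "f a b = nat ((int b - int a) mod int n)" for a b
  define V where "V = {1..n}"
  define E where "E = {{a,b} | a b. a \<in> V \<and> b \<in> V \<and> f a b \<in> D}"
  have n0: "n > 0" using assms by simp
  have h1: "h \<ge> 1" using assms unfolding h_def by simp
  have Dsub: "D \<subseteq> {1..n-1}" using assms unfolding D_def h_def by auto
  have Dsym: "n - d \<in> D" if "d \<in> D" for d
  proof -
    have "d \<in> {1..h} \<or> d \<in> {n-h..n-1} \<or> (odd \<Delta> \<and> d = n div 2)" using that unfolding D_def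
      by (auto split: if_splits)
    then show ?thesis
    proof (elim disjE)
      assume "d \<in> {1..h}" then show ?thesis unfolding D_def using assms unfolding h_def by auto
    next
      assume "d \<in> {n-h..n-1}" then show ?thesis unfolding D_def using assms unfolding h_def by auto
    next
      assume "odd \<Delta> \<and> d = n div 2"
      then have "even n" "d = n div 2" using assms by auto
      then have "n - d = n div 2" by auto
      then show ?thesis using \<open>odd \<Delta> \<and> d = n div 2\<close> unfolding D_def by auto
    qed
  qed
  have fsym: "f b a \<in> D" if "f a b \<in> D" for a b
  proof -
    have nz: "(int b - int a) mod int n \<noteq> 0" using that Dsub unfolding f_def by auto
    have "(int a - int b) mod int n = int n - (int b - int a) mod int n"
      using nz by (metis minus_diff_eq zmod_zminus1_eq_if)
    moreover have m0: "0 \<le> (int b - int a) mod int n" "(int b - int a) mod int n < int n" using n0 by auto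
    ultimately have e1: "int (f b a) = int n - (int b - int a) mod int n" unfolding f_def by simp
    have e2: "int (f a b) = (int b - int a) mod int n" unfolding f_def using m0 by simp
    have "f b a + f a b = n" using e1 e2 by linarith
    then have "f b a = n - f a b" by simp
    then show ?thesis using Dsym that by simp
  qed
  have fneq: "a \<noteq> b" if "f a b \<in> D" for a b
    using that Dsub unfolding f_def by auto
  have EP: "E \<subseteq> P2 V" unfolding E_def P2_def using fneq by auto
  have nbE: "nb E a = {b\<in>V. f a b \<in> D}" if "a \<in> V" for a
  proof
    show "nb E a \<subseteq> {b\<in>V. f a b \<in> D}"
    proof
      fix b assume "b \<in> nb E a"
      then obtain c d where cd: "{a,b} = {c,d}" "c \<in> V" "d \<in> V" "f c d \<in> D"
        unfolding nb_def E_def by auto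
      then have "(a = c \<and> b = d) \<or> (a = d \<and> b = c)" by (auto simp: doubleton_eq_iff)
      then show "b \<in> {b\<in>V. f a b \<in> D}" using cd fsym by auto
    qed
    show "{b\<in>V. f a b \<in> D} \<subseteq> nb E a" using that unfolding nb_def E_def by auto
  qed
  have cardD: "card D = \<Delta>"
  proof -
    have c1: "card {1..h} = h" by simp
    have c2: "card {n-h..n-1} = h" using assms unfolding h_def by auto
    have disj: "{1..h} \<inter> {n-h..n-1} = {}" using assms unfolding h_def by auto
    have c12: "card ({1..h} \<union> {n-h..n-1}) = 2*h" using c1 c2 disj by (simp add: card_Un_disjoint)
    show ?thesis
    proof (cases "odd \<Delta>")
      case True
      have "n div 2 \<notin> {1..h} \<union> {n-h..n-1}" using assms unfolding h_def by auto
      then have "card D = 2*h + 1" unfolding D_def using True c12 by simp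
      then show ?thesis using True unfolding h_def by presburger
    next
      case False
      then show ?thesis unfolding D_def using c12 unfolding h_def by simp
    qed
  qed
  have deg: "card (nb E a) = \<Delta>" if "a \<in> V" for a
  proof -
    have "f a ` {b\<in>V. f a b \<in> D} = {j \<in> f a ` V. j \<in> D}" by auto
    also have "\<dots> = D"
    proof -
      have Dlt: "D \<subseteq> {0..<n}"
      proof
        fix x assume "x \<in> D"
        then have "x \<in> {1..n-1}" using Dsub by blast
        then show "x \<in> {0..<n}" using n0 by (simp, arith)
      qed
      have "f a ` V = {0..<n}" using circ_image[OF n0, of a] unfolding f_def[abs_def] V_def .
      then show ?thesis using Dlt by auto
    qed
    finally have img: "f a ` {b\<in>V. f a b \<in> D} = D" .
    have "inj_on (f a) {b\<in>V. f a b \<in> D}"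
      using circ_inj[OF n0, of a] unfolding f_def[abs_def] V_def by (rule inj_on_subset) auto
    then have "card {b\<in>V. f a b \<in> D} = card D" using img card_image by fastforce
    then show ?thesis using nbE[OF that] cardD by simp
  qed
  have "E \<in> regular_graphs n \<Delta>"
    unfolding regular_graphs_def simple_graphs_def
    using EP deg nb_card[OF EP] unfolding P2_def V_def by auto
  then show ?thesis by blast
qed


lemma pow_fact_le_exp:
  fixes x :: real assumes "0 \<le> x" shows "x^k / fact k \<le> exp x"
proof -
  have s: "summable (\<lambda>n. inverse (fact n) * x^n)" by (rule summable_exp)
  have "(\<Sum>n\<in>{k}. inverse (fact n) * x^n) \<le> (\<Sum>n. inverse (fact n) * x^n)"
    by (rule sum_le_suminf[OF s]) (use assms in auto)
  also have "\<dots> = exp x" by (simp add: exp_def divide_inverse mult.commute)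
  finally show ?thesis by (simp add: divide_inverse mult.commute)
qed

lemma choose_le_exp:
  assumes "k > 0"
  shows "real (m choose k) \<le> (exp 1 * real m / real k)^k"
proof -
  have a: "real (m choose k) * fact k \<le> real m ^ k"
    using binomial_fact_pow[of m k] by (metis of_nat_fact of_nat_le_iff of_nat_mult of_nat_power)
  have b: "real k ^ k / fact k \<le> exp (real k)" by (rule pow_fact_le_exp) simp
  have ek: "exp (real k) = exp 1 ^ k" by (metis exp_of_nat_mult mult.right_neutral)
  have fpos: "(fact k :: real) > 0" by simp
  have kpos: "real k ^ k > 0" using assms by simp
  have "real (m choose k) \<le> real m ^ k / fact k" using a fpos by (simp add: field_simps)
  also have "\<dots> \<le> real m ^ k * exp 1 ^ k / real k ^ k"
  proof -
    have h: "real k ^ k \<le> exp 1 ^ k * fact k" using b ek fpos by (simp add: field_simps)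
    have "real k ^ k * real m ^ k \<le> exp 1 ^ k * fact k * real m ^ k"
      using mult_right_mono[OF h, of "real m ^ k"] by simp
    then show ?thesis using fpos kpos by (simp add: field_simps)
  qed
  also have "\<dots> = (exp 1 * real m / real k)^k" by (simp add: power_divide power_mult_distrib)
  finally show ?thesis .
qed

lemma ln2_ge: "ln 2 \<ge> (2/3::real)"
proof -
  have "exp (2/3::real) ^ 3 = exp 2" by (metis exp_of_nat_mult numeral_times_numeral of_nat_numeral
      divide_real_def times_divide_eq_right  mult.commute nonzero_mult_div_cancel_left zero_neq_numeral
      semiring_norm(12) )
  also have "exp (2::real) = exp 1 ^ 2" by (metis exp_of_nat_mult mult.right_neutral of_nat_numeral)
  also have "\<dots> < (272/100)^2" using e_less_272 by (intro power_strict_mono) auto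
  also have "\<dots> < 2^3" by (simp add: power2_eq_square)
  finally have "exp (2/3::real) < 2" by (smt (verit) power_mono_iff zero_le_numeral exp_gt_zero zero_less_numeral)
  then show ?thesis by (metis exp_gt_zero exp_le_cancel_iff exp_ln less_le zero_less_numeral)
qed

lemma e_gt: "exp 1 > (5/2::real)"
  using e_approx_32 by (simp add: abs_if split: if_splits)

lemma theta_lt1:
  fixes \<kappa> a :: real
  assumes k: "\<kappa> > 1" and a: "a \<ge> 0" "2*a \<le> exp(-1)" "2*a*\<kappa> \<le> (\<kappa>-1)*exp(-1)"
  shows "2 powr (1-\<kappa>) * (1/(1-2*a)) powr \<kappa> < 1"
proof -
  have e1: "exp (-1::real) = 1 / exp 1" by (simp add: exp_minus field_simps)
  have ee: "exp (-1::real) < 2/5" unfolding e1 using e_gt by (simp add: field_simps)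
  have pos: "1 - 2*a > 0" using a ee by linarith
  define c0 where "c0 = 1/(1-2*a)"
  have c0pos: "c0 > 0" using pos unfolding c0_def by simp
  have "ln c0 \<le> c0 - 1" using ln_le_minus_one[OF c0pos] .
  also have "c0 - 1 = 2*a/(1-2*a)" unfolding c0_def using pos by (simp add: field_simps)
  finally have lc: "ln c0 \<le> 2*a/(1-2*a)" .
  have "\<kappa> * ln c0 \<le> \<kappa> * (2*a/(1-2*a))" using lc k by (intro mult_left_mono) auto
  also have "\<dots> = (2*a*\<kappa>)/(1-2*a)" by simp
  also have "\<dots> \<le> ((\<kappa>-1)*exp(-1))/(1-2*a)" using a pos by (intro divide_right_mono) auto
  also have "\<dots> \<le> ((\<kappa>-1)*exp(-1))/(1-exp(-1))"
    using a pos k ee by (intro divide_left_mono) (auto intro!: mult_nonneg_nonneg mult_pos_pos)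
  also have "\<dots> = (\<kappa>-1)/(exp 1 - 1)" unfolding e1 using e_gt by (simp add: field_simps)
  also have "\<dots> < (\<kappa>-1) * ln 2"
  proof -
    have "1/(exp 1 - 1) < (2/3::real)" using e_gt by (simp add: field_simps)
    then have "1/(exp 1 - 1) < ln (2::real)" using ln2_ge by linarith
    then have "(\<kappa>-1) * (1/(exp 1 - 1)) < (\<kappa>-1) * ln 2" using k by (intro mult_strict_left_mono) auto
    then show ?thesis by simp
  qed
  finally have lt: "\<kappa> * ln c0 < (\<kappa>-1) * ln 2" .
  have "2 powr (1-\<kappa>) * c0 powr \<kappa> = exp ((1-\<kappa>) * ln 2 + \<kappa> * ln c0)"
    using c0pos by (simp add: powr_def exp_add mult.commute)
  also have "\<dots> < exp 0" using lt by (intro exp_less_mono) (simp add: algebra_simps)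
  finally show ?thesis unfolding c0_def by simp
qed

lemma beta_facts:
  fixes d \<kappa> \<beta> :: real
  assumes d: "d \<ge> 3" and k: "1 < \<kappa>" "\<kappa> \<le> d / 2"
    and b: "\<beta> = 1/2 * exp (- (1 + 2 / (\<kappa> - 1))) * (d / (2 * \<kappa>)) powr (- (1 + 1 / (\<kappa> - 1)))"
  shows "\<beta> > 0"
    and "exp (1+\<kappa>) * \<beta> powr (\<kappa>-1) * (d/(2*\<kappa>)) powr \<kappa> = 2 powr (1-\<kappa>)"
    and "2*(2*\<kappa>*\<beta>/d) \<le> exp (-1)"
    and "2*(2*\<kappa>*\<beta>/d)*\<kappa> \<le> (\<kappa>-1) * exp (-1)"
    and "\<beta> * d / (2*\<kappa>) \<le> exp (-1) / 2"
proof -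
  define t where "t = \<kappa> - 1"
  define D where "D = d / (2*\<kappa>)"
  have t: "t > 0" unfolding t_def using k by simp
  have D1: "D \<ge> 1" unfolding D_def using k by (simp add: field_simps)
  have Dp: "D > 0" using D1 by simp
  have b': "\<beta> = 1/2 * exp (- (1 + 2/t)) * D powr (- (1 + 1/t))" using b unfolding t_def D_def by simp
  have "D powr (- (1 + 1/t)) > 0" using Dp by simp
  then show bpos: "\<beta> > 0" unfolding b' by simp
  have "\<beta> powr t = (1/2) powr t * exp (- (1 + 2/t)) powr t * (D powr (- (1 + 1/t))) powr t"
    unfolding b' by (simp only: powr_mult)
  also have "exp (- (1 + 2/t)) powr t = exp (- (t + 2))" using t by (simp add: exp_powr_real field_simps)
  also have "(D powr (- (1 + 1/t))) powr t = D powr (- (t+1))"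
  proof -
    have "- (1 + 1/t) * t = - (t+1)" using t by (simp add: field_simps)
    then show ?thesis by (simp only: powr_powr)
  qed
  also have "(1/2::real) powr t = 1 / 2 powr t" by (simp add: powr_divide)
  finally have bt: "\<beta> powr t = 1 / 2 powr t * exp (- (t + 2)) * D powr (- (t+1))" .
  have "exp (1+\<kappa>) * \<beta> powr (\<kappa>-1) * D powr \<kappa>
      = (exp (t+2) * exp (- (t + 2))) * (D powr (t+1) * D powr (- (t+1))) / 2 powr t"
    unfolding t_def[symmetric] bt by (simp add: t_def algebra_simps)
  also have "\<dots> = 1 / 2 powr t"
  proof -
    have "exp (t+2) * exp (-(t+2)) = 1" by (rule exp_minus_inverse)
    moreover have "D powr (t+1) * D powr (-(t+1)) = 1" using Dp by (simp add: powr_add[symmetric])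
    ultimately show ?thesis by simp
  qed
  also have "\<dots> = 2 powr (1-\<kappa>)" unfolding t_def by (simp add: powr_minus_divide[symmetric])
  finally show "exp (1+\<kappa>) * \<beta> powr (\<kappa>-1) * (d/(2*\<kappa>)) powr \<kappa> = 2 powr (1-\<kappa>)"
    unfolding D_def .
  have a_eq: "2*\<kappa>*\<beta>/d = \<beta> / D" unfolding D_def using k d by (simp add: field_simps)
  have tinv: "1/t > 0" using t by simp
  have Dle: "D powr (- (1 + 1/t)) \<le> 1" using powr_mono[of "-(1+1/t)" 0 D] D1 tinv by simp
  have "\<beta> / D \<le> \<beta>" using bpos D1 by (simp add: divide_le_eq mult_le_cancel_left1 less_le)
  also have "\<beta> \<le> 1/2 * exp (- (1 + 2/t))" unfolding b' using Dle by (simp add: mult_left_le)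
  finally have ab: "\<beta> / D \<le> 1/2 * exp (- (1 + 2/t))" .
  have ex1: "exp (- (1 + 2/t)) \<le> exp (-1)" using t by simp
  show "2*(2*\<kappa>*\<beta>/d) \<le> exp (-1)" unfolding a_eq using ab ex1 by linarith
  have "\<kappa> * exp (- (1 + 2/t)) \<le> t * exp (-1)"
  proof -
    have "1 + 2/t \<le> exp (2/t)" using exp_ge_add_one_self[of "2/t"] by simp
    then have "t + 2 \<le> t * exp (2/t)" using t by (simp add: field_simps)
    then have "\<kappa> \<le> t * exp (2/t)" unfolding t_def by simp
    then have "\<kappa> * exp (-(2/t)) \<le> t * exp (2/t) * exp (-(2/t))"
      by (intro mult_right_mono) auto
    also have "\<dots> = t" by (simp add: exp_minus)
    finally have "\<kappa> * exp (-(2/t)) \<le> t" .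
    then have "\<kappa> * exp (-(2/t)) * exp (-1) \<le> t * exp (-1)" by (intro mult_right_mono) auto
    moreover have "exp (- (1 + 2/t)) = exp (-(2/t)) * exp (-1)" unfolding exp_add[symmetric] by simp
    ultimately show ?thesis by (simp add: mult.assoc)
  qed
  moreover have "2*(\<beta>/D)*\<kappa> \<le> exp (- (1 + 2/t)) * \<kappa>"
  proof -
    have "2*(\<beta>/D) \<le> exp (- (1 + 2/t))" using ab by linarith
    then show ?thesis using k by (intro mult_right_mono) auto
  qed
  ultimately show "2*(2*\<kappa>*\<beta>/d)*\<kappa> \<le> (\<kappa>-1) * exp (-1)"
    unfolding a_eq t_def[symmetric] by (simp add: mult.commute)
  have "\<beta> * d / (2*\<kappa>) = \<beta> * D" unfolding D_def by simp
  also have "\<dots> = 1/2 * exp (- (1 + 2/t)) * (D powr (- (1 + 1/t)) * D)" unfolding b' by simp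
  also have "D powr (- (1 + 1/t)) * D = D powr (- (1/t))"
  proof -
    have "D powr (- (1 + 1/t)) * D powr 1 = D powr (- (1 + 1/t) + 1)" by (rule powr_add[symmetric])
    moreover have "D powr 1 = D" using Dp by (simp add: powr_one)
    moreover have "- (1 + 1/t) + 1 = - (1/t)" by simp
    ultimately show ?thesis by simp
  qed
  also have "D powr (- (1/t)) \<le> 1" using powr_mono[of "-(1/t)" 0 D] D1 tinv by simp
  then have "1/2 * exp (- (1 + 2/t)) * D powr (- (1/t)) \<le> 1/2 * exp (- (1 + 2/t))"
    by (simp add: mult_left_le)
  finally show "\<beta> * d / (2*\<kappa>) \<le> exp (-1) / 2" using ex1 by linarith
qed


lemma aux_reassoc: "(\<rho>::real) \<noteq> 0 \<Longrightarrow> e / \<rho> * (f * P * Y * Z) = (e*f) * (P/\<rho>) * Y * Z"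
  by (simp add: field_simps)

lemma aux_mono:
  fixes A1 A2 Dk C1 C2 E :: real
  assumes "A1 \<le> A2" "C1 \<le> C2" "0 \<le> A1" "0 \<le> Dk" "0 \<le> C1" "0 \<le> E"
  shows "E * A1 * Dk * C1 \<le> E * A2 * Dk * C2"
proof -
  have "A1 * Dk \<le> A2 * Dk" using assms by (intro mult_right_mono) auto
  then have "(A1 * Dk) * C1 \<le> (A2 * Dk) * C2" using assms by (intro mult_mono) auto
  then have "E * ((A1 * Dk) * C1) \<le> E * ((A2 * Dk) * C2)" using assms by (intro mult_left_mono) auto
  then show ?thesis by (simp add: mult.assoc)
qed

lemma bound_n:
  fixes n r k :: nat and d \<kappa> \<beta> a L :: real
  assumes k1: "\<kappa> > 1" and d: "d > 0" and \<beta>: "\<beta> > 0"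
    and H1: "exp (1+\<kappa>) * \<beta> powr (\<kappa>-1) * (d/(2*\<kappa>)) powr \<kappa> = 2 powr (1-\<kappa>)"
    and H2: "2*a \<le> exp(-1)" "a \<ge> 0"
    and H3: "\<beta>*d/(2*\<kappa>) \<le> exp(-1)/2"
    and r: "r \<ge> 1" "real r \<le> \<beta> * n" and kk: "real k \<ge> \<kappa> * r"
    and L: "L \<ge> n*d*(1-2*a)"
  shows "real (n choose r) * (real ((r choose 2) choose k) * (d^2/L)^k)
          \<le> (2 powr (1-\<kappa>) * (1/(1-2*a)) powr \<kappa>)^r"
proof -
  have e1: "exp (-1::real) = 1 / exp 1" by (simp add: exp_minus field_simps)
  have ee: "exp (-1::real) < 2/5" unfolding e1 using e_gt by (simp add: field_simps)
  have a2: "1 - 2*a \<ge> 3/5" using H2 ee by linarith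
  define c0 where "c0 = 1/(1-2*a)"
  have c0pos: "c0 > 0" and c02: "c0 \<le> 2" using a2 unfolding c0_def by (auto simp: field_simps)
  have rpos: "real r > 0" using r by simp
  have npos: "real n > 0"
  proof -
    have "\<beta> * n > 0" using r rpos by linarith
    then show ?thesis using \<beta> by (simp add: zero_less_mult_iff)
  qed
  have "n*d*(1-2*a) > 0" using npos d a2 by (intro mult_pos_pos) auto
  then have Lpos: "L > 0" using L by linarith
  define c where "c = n*d/L"
  have cpos: "c > 0" unfolding c_def using npos d Lpos by simp
  have cc0: "c \<le> c0"
  proof -
    have nd: "n*d > 0" using npos d by simp
    have "n*d/L \<le> n*d/(n*d*(1-2*a))"
      by (rule frac_le) (use nd a2 L in \<open>auto intro: mult_pos_pos\<close>)
    also have "\<dots> = 1/(1-2*a)" by (rule nonzero_divide_mult_cancel_left) (use npos d in simp)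
    finally show ?thesis unfolding c_def c0_def .
  qed
  define \<rho> where "\<rho> = real r / real n"
  have \<rho>pos: "\<rho> > 0" unfolding \<rho>_def using rpos npos by simp
  have \<rho>\<beta>: "\<rho> \<le> \<beta>" unfolding \<rho>_def using r npos by (simp add: field_simps)
  define Dd where "Dd = d/(2*\<kappa>)"
  have Ddpos: "Dd > 0" unfolding Dd_def using d k1 by simp
  define q where "q = exp 1 * \<rho> * Dd * c"
  have qpos: "q > 0" unfolding q_def using \<rho>pos Ddpos cpos by simp
  have q_eq: "q = exp 1 * real r * (d^2/L) / (2*\<kappa>)"
    unfolding q_def \<rho>_def Dd_def c_def using npos k1 by (simp add: field_simps power2_eq_square)
  have q1: "q \<le> 1"
  proof -
    have "\<rho> * Dd \<le> \<beta> * Dd" using \<rho>\<beta> Ddpos by (intro mult_right_mono) auto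
    also have "\<dots> \<le> exp (-1) / 2" using H3 unfolding Dd_def by simp
    finally have "\<rho> * Dd \<le> exp (-1) / 2" .
    moreover have "\<rho> * Dd \<ge> 0" using \<rho>pos Ddpos by simp
    moreover have "c \<le> 2" using cc0 c02 by simp
    ultimately have "(\<rho> * Dd) * c \<le> (exp (-1) / 2) * 2"
      using cpos by (intro mult_mono) auto
    then have "exp 1 * ((\<rho> * Dd) * c) \<le> exp 1 * exp (-1)" by simp
    also have "exp 1 * exp (-1) = (1::real)" using exp_minus_inverse[of 1] by simp
    finally show ?thesis unfolding q_def by (simp add: mult.assoc)
  qed
  have X: "real (n choose r) \<le> (exp 1 * n / r)^r" using choose_le_exp[of r n] r by simp
  define m where "m = r choose 2"
  have m2: "2 * m \<le> r * r"
  proof -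
    have "2 * m \<le> r * (r - 1)" unfolding m_def choose_two by (rule times_div_less_eq_dividend)
    also have "\<dots> \<le> r * r" by simp
    finally show ?thesis .
  qed
  have "real (2 * m) \<le> real (r * r)" using m2 by (simp only: of_nat_le_iff)
  then have "2 * real m \<le> real r * real r" by simp
  then have mr: "real m \<le> real r ^ 2 / 2" by (simp add: power2_eq_square)
  have "\<kappa> * r > 0" using k1 rpos by simp
  then have "real k > 0" using kk by linarith
  then have kpos: "k > 0" by simp
  have kposr: "real k > 0" using kpos by simp
  define p where "p = d^2/L"
  have ppos: "p > 0" unfolding p_def using d Lpos by simp
  have Y: "real (m choose k) \<le> (exp 1 * m / k)^k" using choose_le_exp[of k m] kpos by simp
  have "real (m choose k) * p^k \<le> (exp 1 * m / k)^k * p^k"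
    using Y ppos by (intro mult_right_mono) auto
  also have "\<dots> = (exp 1 * m * p / k)^k" by (simp add: power_mult_distrib[symmetric])
  also have "\<dots> \<le> q^k"
  proof (rule power_mono)
    show "0 \<le> exp 1 * m * p / k" using ppos by simp
    have "real m / real k \<le> (real r ^ 2 / 2) / (\<kappa> * r)"
      using mr kk kposr rpos k1 by (intro frac_le) auto
    also have "\<dots> = real r / (2*\<kappa>)" using rpos by (simp add: power2_eq_square field_simps)
    finally have "real m / real k \<le> real r / (2*\<kappa>)" .
    then have "exp 1 * p * (real m / real k) \<le> exp 1 * p * (real r / (2*\<kappa>))"
      using ppos by (intro mult_left_mono) auto
    then show "exp 1 * m * p / k \<le> q" unfolding q_eq p_def by (simp add: field_simps)
  qed
  also have "q^k = q powr (real k)" using qpos by (simp add: powr_realpow)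
  also have "\<dots> \<le> q powr (\<kappa> * r)" using qpos q1 kk by (intro powr_mono') auto
  also have "\<dots> = (q powr \<kappa>) powr (real r)" by (simp add: powr_powr)
  also have "\<dots> = (q powr \<kappa>)^r" using qpos by (intro powr_realpow) simp
  finally have YY: "real (m choose k) * p^k \<le> (q powr \<kappa>)^r" .
  have key: "exp 1 * n / r * q powr \<kappa> \<le> 2 powr (1-\<kappa>) * c0 powr \<kappa>"
  proof -
    have "q powr \<kappa> = exp 1 powr \<kappa> * \<rho> powr \<kappa> * Dd powr \<kappa> * c powr \<kappa>"
      unfolding q_def by (simp add: powr_mult)
    also have "exp 1 powr \<kappa> = exp \<kappa>" by (simp add: exp_powr_real)
    finally have qk: "q powr \<kappa> = exp \<kappa> * \<rho> powr \<kappa> * Dd powr \<kappa> * c powr \<kappa>" .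
    have "exp 1 * n / r = exp 1 / \<rho>" unfolding \<rho>_def by simp
    moreover have "\<rho> powr \<kappa> / \<rho> = \<rho> powr (\<kappa>-1)" using \<rho>pos by (simp add: powr_diff powr_one)
    ultimately have "exp 1 * n / r * q powr \<kappa> = (exp 1 * exp \<kappa>) * \<rho> powr (\<kappa>-1) * Dd powr \<kappa> * c powr \<kappa>"
      unfolding qk using aux_reassoc[of \<rho> "exp 1" "exp \<kappa>" "\<rho> powr \<kappa>" "Dd powr \<kappa>" "c powr \<kappa>"] \<rho>pos by simp
    also have "exp 1 * exp \<kappa> = exp (1+\<kappa>)" by (simp add: exp_add)
    also have "exp (1+\<kappa>) * \<rho> powr (\<kappa>-1) * Dd powr \<kappa> * c powr \<kappa>
        \<le> exp (1+\<kappa>) * \<beta> powr (\<kappa>-1) * Dd powr \<kappa> * c0 powr \<kappa>"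
    proof -
      have "\<rho> powr (\<kappa>-1) \<le> \<beta> powr (\<kappa>-1)" using \<rho>\<beta> \<rho>pos k1 by (intro powr_mono2) auto
      moreover have "c powr \<kappa> \<le> c0 powr \<kappa>" using cc0 cpos k1 by (intro powr_mono2) auto
      ultimately show ?thesis by (rule aux_mono) auto
    qed
    also have "\<dots> = 2 powr (1-\<kappa>) * c0 powr \<kappa>" using H1 unfolding Dd_def by simp
    finally show ?thesis .
  qed
  have "real (n choose r) * (real ((r choose 2) choose k) * (d^2/L)^k)
      \<le> (exp 1 * n / r)^r * (q powr \<kappa>)^r"
    using X YY unfolding m_def p_def by (rule mult_mono) (use Lpos in auto)
  also have "\<dots> = (exp 1 * n / r * q powr \<kappa>)^r" by (rule power_mult_distrib[symmetric])
  also have "\<dots> \<le> (2 powr (1-\<kappa>) * c0 powr \<kappa>)^r"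
    using key npos rpos qpos by (intro power_mono) auto
  finally show ?thesis unfolding c0_def .
qed

lemma alpha_le:
  fixes \<kappa> :: real
  assumes "r \<ge> 1" "r \<le> n" "\<And>S. S \<subseteq> {1..n} \<Longrightarrow> card S = r \<Longrightarrow> real (edges_in E S) \<le> \<kappa> * r"
  shows "alpha_r n E r \<le> \<kappa>"
proof -
  define A where "A = {edges_in E S | S. S \<subseteq> {1..n} \<and> card S = r}"
  have "A = (\<lambda>S. edges_in E S) ` {S. S \<subseteq> {1..n} \<and> card S = r}" unfolding A_def by auto
  then have finA: "finite A" by simp
  have "{1..r} \<subseteq> {1..n} \<and> card {1..r} = r" using assms by auto
  then have neA: "A \<noteq> {}" unfolding A_def by blast
  have "Max A \<in> A" using finA neA by (rule Max_in)
  then obtain S where S: "S \<subseteq> {1..n}" "card S = r" "Max A = edges_in E S" unfolding A_def by auto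
  then have "real (Max A) \<le> \<kappa> * r" using assms(3) by simp
  then show ?thesis unfolding alpha_r_def A_def[symmetric] using assms(1) by (simp add: field_simps)
qed

theorem lemma4p3:
  fixes \<Delta> :: nat and \<kappa> \<beta> :: real
  assumes "\<Delta> \<ge> 3"
    and "1 < \<kappa>" and "\<kappa> \<le> real \<Delta> / 2"
    and "\<beta> = 1/2 * exp (- (1 + 2 / (\<kappa> - 1)))
                 * (real \<Delta> / (2 * \<kappa>)) powr (- (1 + 1 / (\<kappa> - 1)))"
  shows "aas_reg \<Delta> (\<lambda>n E. real n \<ge> 1 / \<beta> \<longrightarrow>
                          alpha_r n E (nat \<lfloor>\<beta> * real n\<rfloor>) \<le> \<kappa>)"
proof -
  define d where "d = real \<Delta>"
  have d3: "d \<ge> 3" unfolding d_def using assms(1) by simp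
  have kd: "\<kappa> \<le> d/2" unfolding d_def using assms(3) .
  have bdef: "\<beta> = 1/2 * exp (- (1 + 2 / (\<kappa> - 1))) * (d / (2 * \<kappa>)) powr (- (1 + 1 / (\<kappa> - 1)))"
    unfolding d_def using assms(4) .
  note bf = beta_facts[OF d3 assms(2) kd bdef]
  have bpos: "\<beta> > 0" and H1: "exp (1+\<kappa>) * \<beta> powr (\<kappa>-1) * (d/(2*\<kappa>)) powr \<kappa> = 2 powr (1-\<kappa>)"
    and H2: "2*(2*\<kappa>*\<beta>/d) \<le> exp (-1)" and H2': "2*(2*\<kappa>*\<beta>/d)*\<kappa> \<le> (\<kappa>-1) * exp (-1)"
    and H3: "\<beta> * d / (2*\<kappa>) \<le> exp (-1) / 2" using bf by auto
  define a where "a = 2*\<kappa>*\<beta>/d"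
  have a0: "a \<ge> 0" unfolding a_def using bpos assms(2) d3 by simp
  define \<theta> where "\<theta> = 2 powr (1-\<kappa>) * (1/(1-2*a)) powr \<kappa>"
  have th1: "\<theta> < 1" unfolding \<theta>_def using theta_lt1[of \<kappa> a] assms(2) a0 H2 H2' unfolding a_def by auto
  have e1: "exp (-1::real) = 1 / exp 1" by (simp add: exp_minus field_simps)
  have ee: "exp (-1::real) < 2/5" unfolding e1 using e_gt by (simp add: field_simps)
  have th0: "\<theta> \<ge> 0" unfolding \<theta>_def by simp
  have b1: "\<beta> < 1"
  proof -
    have "d/(2*\<kappa>) \<ge> 1" using kd assms(2) by (simp add: field_simps)
    then have "\<beta> * 1 \<le> \<beta> * (d/(2*\<kappa>))" using bpos by (intro mult_left_mono) auto
    then show ?thesis using H3 ee by simp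
  qed
  show ?thesis unfolding aas_reg_def
  proof (intro allI impI)
    fix \<epsilon> :: real assume \<epsilon>: "\<epsilon> > 0"
    have "(\<lambda>m. \<theta> ^ m) \<longlonglongrightarrow> 0" using th0 th1 by (intro LIMSEQ_power_zero) simp
    from order_tendstoD(2)[OF this \<epsilon>] obtain M where M: "\<And>m. m \<ge> M \<Longrightarrow> \<theta> ^ m < \<epsilon>"
      unfolding eventually_sequentially by blast
    define C where "C = real (2 + 4*\<Delta> + 2*\<Delta>^2)"
    define N where "N = nat \<lceil>(real M + 1)/\<beta>\<rceil> + 2*\<Delta> + 2 + nat \<lceil>C/(2*\<kappa>*\<beta>)\<rceil>"
    show "\<exists>N. \<forall>n\<ge>N. (even n \<or> even \<Delta>) \<longrightarrow>
        prob_reg n \<Delta> (\<lambda>E. real n \<ge> 1 / \<beta> \<longrightarrow> alpha_r n E (nat \<lfloor>\<beta> * real n\<rfloor>) \<le> \<kappa>) \<ge> 1 - \<epsilon>"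
    proof (intro exI allI impI)
      fix n assume nN: "N \<le> n" and par: "even n \<or> even \<Delta>"
      have nM: "real n \<ge> (real M + 1)/\<beta>"
      proof -
        have "(real M + 1)/\<beta> \<le> real (nat \<lceil>(real M + 1)/\<beta>\<rceil>)" by linarith
        also have "\<dots> \<le> real N" unfolding N_def by simp
        finally show ?thesis using nN by linarith
      qed
      have nC: "real n \<ge> C/(2*\<kappa>*\<beta>)"
      proof -
        have "C/(2*\<kappa>*\<beta>) \<le> real (nat \<lceil>C/(2*\<kappa>*\<beta>)\<rceil>)" by linarith
        also have "\<dots> \<le> real N" unfolding N_def by simp
        finally show ?thesis using nN by linarith
      qed
      have nD: "n \<ge> 2*\<Delta> + 2" using nN unfolding N_def by simp
      have bn: "\<beta> * n \<ge> real M + 1" using nM bpos by (simp add: field_simps)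
      have bnC: "2*\<kappa>*\<beta> * n \<ge> C" using nC bpos assms(2) by (simp add: field_simps)
      define r where "r = nat \<lfloor>\<beta> * real n\<rfloor>"
      have rle: "real r \<le> \<beta> * n" unfolding r_def using bn by linarith
      have rge: "real r \<ge> \<beta> * n - 1" unfolding r_def using bn by linarith
      have rM: "r \<ge> M" using rge bn by linarith
      have fl: "1 \<le> \<lfloor>\<beta> * real n\<rfloor>" using bn by (subst le_floor_iff) simp
      have r1: "r \<ge> 1" unfolding r_def using nat_mono[OF fl] by simp
      have rn: "r \<le> n"
      proof -
        have "\<beta> * real n \<le> 1 * real n" using b1 by (intro mult_right_mono) auto
        then show ?thesis using rle by linarith
      qed
      define k where "k = nat \<lfloor>\<kappa> * real r\<rfloor> + 1"
      have kr: "real k \<ge> \<kappa> * r" unfolding k_def using assms(2) by linarith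
      have fk: "real (nat \<lfloor>\<kappa> * real r\<rfloor>) = of_int \<lfloor>\<kappa> * real r\<rfloor>" using assms(2) by simp
      have kr2: "real k \<le> \<kappa> * r + 1" unfolding k_def using fk of_int_floor_le[of "\<kappa> * real r"] by simp
      define L where "L = real (n*\<Delta>) - real (2*k + 4*\<Delta> + 2*\<Delta>^2)"
      have LL: "L \<ge> n*d*(1-2*a)"
      proof -
        have "\<kappa> * real r \<le> \<kappa> * (\<beta> * real n)" using rle assms(2) by (intro mult_left_mono) auto
        then have "2 * real k \<le> 2*\<kappa>*\<beta>*n + 2" using kr2 by simp
        moreover have "n*d*(1-2*a) = n*d - 4*\<kappa>*\<beta>*n" unfolding a_def using d3 by (simp add: field_simps)
        moreover have "L = n*d - 2*real k - (C - 2)" unfolding L_def C_def d_def by simp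
        ultimately show ?thesis using bnC by linarith
      qed
      have a2: "1 - 2*a > 0" using H2 ee unfolding a_def by linarith
      have npos: "real n > 0" using nD by simp
      have Lpos: "L > 0" using LL npos d3 a2 by (smt (verit) mult_pos_pos)
      define R where "R = regular_graphs n \<Delta>"
      have finR: "finite R" unfolding R_def by (rule finite_reg)
      have Rne: "R \<noteq> {}" unfolding R_def using exists_regular[of \<Delta> n] assms(1) nD par by auto
      have cR: "real (card R) > 0" using finR Rne by (simp add: card_gt_0_iff)
      define P where "P = (\<lambda>E. real n \<ge> 1 / \<beta> \<longrightarrow> alpha_r n E (nat \<lfloor>\<beta> * real n\<rfloor>) \<le> \<kappa>)"
      define Ss where "Ss = {S. S \<subseteq> {1..n} \<and> card S = r}"
      have finSs: "finite Ss" unfolding Ss_def by simp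
      have cSs: "card Ss = n choose r" unfolding Ss_def using n_subsets[of "{1..n}" r] by simp
      define bad where "bad = {E\<in>R. \<not> P E}"
      have badsub: "bad \<subseteq> (\<Union>S\<in>Ss. {E\<in>R. k \<le> edges_in E S})"
      proof
        fix E assume "E \<in> bad"
        then have ER: "E \<in> R" and nP: "\<not> P E" unfolding bad_def by auto
        show "E \<in> (\<Union>S\<in>Ss. {E\<in>R. k \<le> edges_in E S})"
        proof (rule ccontr)
          assume nU: "E \<notin> (\<Union>S\<in>Ss. {E\<in>R. k \<le> edges_in E S})"
          have lt: "edges_in E S < k" if "S \<subseteq> {1..n}" "card S = r" for S
          proof (rule ccontr)
            assume "\<not> edges_in E S < k"
            then have "E \<in> {E\<in>R. k \<le> edges_in E S}" using ER by simp
            moreover have "S \<in> Ss" using that unfolding Ss_def by simp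
            ultimately show False using nU by blast
          qed
          have "alpha_r n E r \<le> \<kappa>"
          proof (rule alpha_le[OF r1 rn])
            fix S assume "S \<subseteq> {1..n}" "card S = r"
            then have "edges_in E S < nat \<lfloor>\<kappa> * real r\<rfloor> + 1" using lt unfolding k_def by blast
            then have "edges_in E S \<le> nat \<lfloor>\<kappa> * real r\<rfloor>" by simp
            then have "real (edges_in E S) \<le> real (nat \<lfloor>\<kappa> * real r\<rfloor>)" by simp
            also have "\<dots> \<le> \<kappa> * r" using fk of_int_floor_le[of "\<kappa> * real r"] by simp
            finally show "real (edges_in E S) \<le> \<kappa> * r" .
          qed
          then have "P E" unfolding P_def r_def by simp
          then show False using nP by simp
        qed
      qed
      have "real (card bad) \<le> real (card (\<Union>S\<in>Ss. {E\<in>R. k \<le> edges_in E S}))"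
        using badsub finR by (intro of_nat_mono card_mono) (auto intro: finite_subset[of _ R])
      also have "\<dots> \<le> real (\<Sum>S\<in>Ss. card {E\<in>R. k \<le> edges_in E S})"
        using finSs by (intro of_nat_mono card_UN_le)
      also have "\<dots> = (\<Sum>S\<in>Ss. real (card {E\<in>R. k \<le> edges_in E S}))" by simp
      also have "\<dots> \<le> (\<Sum>S\<in>Ss. real ((r choose 2) choose k) * (\<Delta>^2/L)^k * card R)"
      proof (rule sum_mono)
        fix S assume "S \<in> Ss"
        then have S: "S \<subseteq> {1..n}" "card S = r" unfolding Ss_def by auto
        show "real (card {E\<in>R. k \<le> edges_in E S}) \<le> real ((r choose 2) choose k) * (\<Delta>^2/L)^k * card R"
          using S_bound[OF L_def Lpos S(1) order.refl] S(2) unfolding R_def by simp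
      qed
      also have "\<dots> = real (n choose r) * (real ((r choose 2) choose k) * (d^2/L)^k) * card R"
        using cSs unfolding d_def by simp
      also have "\<dots> \<le> \<theta>^r * card R"
      proof (rule mult_right_mono)
        show "real (n choose r) * (real ((r choose 2) choose k) * (d^2/L)^k) \<le> \<theta>^r"
          unfolding \<theta>_def
          by (rule bound_n[OF assms(2) _ bpos H1 _ a0 H3 r1 rle kr LL]) (use d3 H2 a_def in auto)
      qed simp
      finally have bb: "real (card bad) \<le> \<theta>^r * card R" .
      have badR: "bad \<subseteq> R" unfolding bad_def by auto
      have good: "{E\<in>R. P E} = R - bad" unfolding bad_def by auto
      have "real (card {E\<in>R. P E}) = real (card R) - real (card bad)"
        unfolding good using badR finR by (simp add: card_Diff_subset finite_subset of_nat_diff card_mono)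
      also have "\<dots> \<ge> card R - \<theta>^r * card R" using bb by linarith
      finally have "real (card {E\<in>R. P E}) / card R \<ge> (card R - \<theta>^r * card R) / card R"
        using cR by (intro divide_right_mono) auto
      moreover have "(card R - \<theta>^r * card R) / card R = 1 - \<theta>^r" using cR by (simp add: field_simps)
      moreover have "\<theta>^r < \<epsilon>" using M rM by simp
      ultimately have "real (card {E\<in>R. P E}) / card R \<ge> 1 - \<epsilon>" by linarith
      then show "prob_reg n \<Delta> (\<lambda>E. real n \<ge> 1 / \<beta> \<longrightarrow> alpha_r n E (nat \<lfloor>\<beta> * real n\<rfloor>) \<le> \<kappa>) \<ge> 1 - \<epsilon>"
        unfolding prob_reg_def R_def[symmetric] P_def[symmetric] .
    qed
  qed
qed

end
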